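(* Let $f(x)\in\mathbb{Q}[x,x^{-1}]$ be a non-zero Laurent polynomial which is odd, i.e. $f(-x)=-f(x)$. Then $f$ satisfies WP: there exists a positive integer $N$ such that every rational number is of the form $f(a_1)+\cdots+f(a_N)$ with $a_1,\dots,a_N\in\mathbb{Q}^*$.
   Context: A rational function $f\in\mathbb{Q}(x)$ satisfies WP if for some $N\ge1$ every rational number is a sum of $N$ elements of $f(\mathbb{Q})$, the set of values of $f$ at rational non-poles. *)

theory Defs
  imports Complex_Main
begin

text \<open>A Laurent polynomial over Q is given by a finitely supported coefficient
function c :: int => rat (c k is the coefficient of x^k).\<close>

definition laurent_poly :: "(int \<Rightarrow> rat) \<Rightarrow> bool" where
  "laurent_poly c \<longleftrightarrow> finite {k. c k \<noteq> 0}"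

definition leval :: "(int \<Rightarrow> rat) \<Rightarrow> rat \<Rightarrow> rat" where
  "leval c a = (\<Sum>k\<in>{k. c k \<noteq> 0}. c k * a powi k)"

text \<open>Oddness as an identity of Laurent polynomials: f(-x) = -f(x), i.e.
the coefficient of x^k in f(-x), namely (-1)^k c k, equals - c k.\<close>
definition laurent_odd :: "(int \<Rightarrow> rat) \<Rightarrow> bool" where
  "laurent_odd c \<longleftrightarrow> (\<forall>k. (-1) powi k * c k = - c k)"

end

theory Submission imports Defs begin

definition rep :: "(rat \<Rightarrow> rat) \<Rightarrow> nat \<Rightarrow> rat \<Rightarrow> bool" where
  "rep f N v \<longleftrightarrow> (\<exists>a::nat \<Rightarrow> rat. (\<forall>i<N. a i \<noteq> 0) \<and> v = (\<Sum>i<N. f (a i)))"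

definition expr :: "(rat \<Rightarrow> rat) \<Rightarrow> nat \<Rightarrow> (rat \<Rightarrow> rat) \<Rightarrow> bool" where
  "expr f N h \<longleftrightarrow> (\<exists>F. finite F \<and> (\<forall>x. x \<notin> F \<longrightarrow> rep f N (h x)))"

lemma sum_split_nat: "(\<Sum>i<N+M::nat. g i) = (\<Sum>i<N. g i) + (\<Sum>i<M. g (i + N)::rat)"
proof -
  have "{..<N+M} = {..<N} \<union> {N..<M+N}" by auto
  hence "(\<Sum>i<N+M. g i) = (\<Sum>i<N. g i) + (\<Sum>i\<in>{0+N..<M+N}. g i)"
    by (simp add: sum.union_disjoint ivl_disj_int)
  also have "(\<Sum>i\<in>{0+N..<M+N}. g i) = (\<Sum>i<M. g (i + N))"
    by (subst sum.shift_bounds_nat_ivl) (simp add: lessThan_atLeast0)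
  finally show ?thesis .
qed

lemma rep_add: assumes "rep f N u" "rep f M v" shows "rep f (N+M) (u+v)"
proof -
  obtain a where a: "\<forall>i<N. a i \<noteq> 0" "u = (\<Sum>i<N. f (a i))" using assms(1) rep_def by auto
  obtain b where b: "\<forall>i<M. b i \<noteq> 0" "v = (\<Sum>i<M. f (b i))" using assms(2) rep_def by auto
  define c where "c i = (if i < N then a i else b (i - N))" for i
  have "(\<Sum>i<N+M. f (c i)) = (\<Sum>i<N. f (c i)) + (\<Sum>i<M. f (c (i + N)))" by (rule sum_split_nat)
  also have "\<dots> = u + v" using a b by (simp add: c_def)
  finally have e: "u + v = (\<Sum>i<N+M. f (c i))" by simp
  have nz: "\<forall>i<N+M. c i \<noteq> 0"
  proof (intro allI impI)
    fix i assume "i < N + M"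
    then show "c i \<noteq> 0" using a(1) b(1) by (cases "i < N") (auto simp: c_def)
  qed
  show ?thesis unfolding rep_def using e nz by blast
qed

lemma rep_neg: assumes "\<forall>a. f (-a) = - f a" "rep f N u" shows "rep f N (-u)"
proof -
  obtain a where a: "\<forall>i<N. a i \<noteq> 0" "u = (\<Sum>i<N. f (a i))" using assms(2) rep_def by auto
  show ?thesis unfolding rep_def using a assms(1)
    by (intro exI[of _ "\<lambda>i. - a i"]) (auto simp: sum_negf)
qed

lemma rep_zero: "rep f 0 0" unfolding rep_def by auto

lemma rep_mult: assumes "rep f N u" shows "rep f (n*N) (of_nat n * u)"
proof (induction n)
  case 0 then show ?case by (simp add: rep_zero)
next
  case (Suc n)
  have "rep f (N + n*N) (u + of_nat n * u)" by (rule rep_add[OF assms Suc])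
  moreover have "Suc n * N = N + n * N" by simp
  moreover have "of_nat (Suc n) * u = u + of_nat n * u" by (simp add: distrib_right)
  ultimately show ?case by simp
qed

lemma expr_add: assumes "expr f N h" "expr f M k" shows "expr f (N+M) (\<lambda>x. h x + k x)"
proof -
  obtain F where F: "finite F" "\<forall>x. x \<notin> F \<longrightarrow> rep f N (h x)" using assms(1) expr_def by auto
  obtain G where G: "finite G" "\<forall>x. x \<notin> G \<longrightarrow> rep f M (k x)" using assms(2) expr_def by auto
  show ?thesis unfolding expr_def using F G rep_add
    by (intro exI[of _ "F \<union> G"]) auto
qed

lemma expr_neg: assumes "\<forall>a. f (-a) = - f a" "expr f N h" shows "expr f N (\<lambda>x. - h x)"
proof -
  obtain F where F: "finite F" "\<forall>x. x \<notin> F \<longrightarrow> rep f N (h x)" using assms(2) expr_def by auto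
  have "\<forall>x. x \<notin> F \<longrightarrow> rep f N (- h x)" using F(2) rep_neg[OF assms(1)] by simp
  then show ?thesis unfolding expr_def using F(1) by blast
qed

lemma expr_mult: assumes "expr f N h" shows "expr f (n*N) (\<lambda>x. of_nat n * h x)"
proof -
  obtain F where F: "finite F" "\<forall>x. x \<notin> F \<longrightarrow> rep f N (h x)" using assms expr_def by auto
  have "\<forall>x. x \<notin> F \<longrightarrow> rep f (n*N) (of_nat n * h x)" using F(2) rep_mult by simp
  then show ?thesis unfolding expr_def using F(1) by blast
qed

lemma expr_comp: assumes "expr f N h" "\<And>F. finite F \<Longrightarrow> finite (\<phi> -` F)"
  shows "expr f N (\<lambda>x. h (\<phi> x))"
proof -
  obtain F where F: "finite F" "\<forall>x. x \<notin> F \<longrightarrow> rep f N (h x)" using assms(1) expr_def by auto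
  show ?thesis unfolding expr_def using F assms(2)[OF F(1)]
    by (intro exI[of _ "\<phi> -` F"]) auto
qed

lemma expr_cong: assumes "expr f N h" "\<And>x. h x = k x" shows "expr f N k"
proof -
  have "h = k" using assms(2) by auto
  thus ?thesis using assms(1) by simp
qed

lemma fin_affine: assumes "(\<alpha>::rat) \<noteq> 0" "finite F" shows "finite ((\<lambda>x. \<alpha> * x + \<beta>) -` F)"
proof -
  have "(\<lambda>x. \<alpha> * x + \<beta>) -` F \<subseteq> (\<lambda>y. (y - \<beta>) / \<alpha>) ` F"
  proof
    fix x assume "x \<in> (\<lambda>x. \<alpha> * x + \<beta>) -` F"
    then show "x \<in> (\<lambda>y. (y - \<beta>) / \<alpha>) ` F" using assms(1)
      by (intro image_eqI[of _ _ "\<alpha> * x + \<beta>"]) auto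
  qed
  thus ?thesis using finite_subset finite_imageI[OF assms(2)] by metis
qed

lemma fin_inverse: assumes "finite F" shows "finite ((\<lambda>x::rat. inverse x) -` F)"
proof -
  have "(\<lambda>x::rat. inverse x) -` F \<subseteq> inverse ` F"
  proof
    fix x :: rat assume "x \<in> (\<lambda>x::rat. inverse x) -` F"
    then show "x \<in> inverse ` F" by (intro image_eqI[of _ _ "inverse x"]) auto
  qed
  thus ?thesis using finite_subset finite_imageI[OF assms] by metis
qed

lemma two_powi_j: "of_nat (2 ^ nat (-j)) * (2::rat) powi j = of_nat (2 ^ nat j)"
proof (cases "j \<ge> 0")
  case True
  then have "j = int (nat j)" by simp
  then have "(2::rat) powi j = 2 ^ nat j" by (metis power_int_of_nat)
  then show ?thesis using True by simp
next
  case False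
  then have "j = - int (nat (-j))" by simp
  then have "(2::rat) powi j = inverse (2 ^ nat (-j))" by (metis power_int_minus power_int_of_nat)
  then show ?thesis using False by simp
qed

lemma two_powi_ne: "k \<noteq> j \<Longrightarrow> (2::rat) powi k \<noteq> 2 powi j"
  by (metis linorder_neq_iff one_less_numeral_iff power_int_strict_increasing semiring_norm(76) order_less_irrefl)

lemma kill:
  assumes odd: "\<forall>a. f (-a) = - f a"
  shows "finite K \<Longrightarrow> m \<notin> K \<Longrightarrow> (\<forall>k. d k \<noteq> 0 \<longrightarrow> k \<in> insert m K) \<Longrightarrow> d m \<noteq> 0 \<Longrightarrow>
    expr f N (\<lambda>x. \<Sum>k\<in>insert m K. d k * x powi k) \<Longrightarrow> \<exists>N r. r \<noteq> 0 \<and> expr f N (\<lambda>x. r * x powi m)"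
proof (induction K arbitrary: d N rule: finite_induct)
  case empty
  have "expr f N (\<lambda>x. d m * x powi m)" using empty.prems(4) by simp
  then show ?case using empty.prems(3) by (intro exI[of _ N] exI[of _ "d m"]) simp
next
  case (insert j K)
  define A :: nat where "A = 2 ^ nat (-j)"
  define B :: nat where "B = 2 ^ nat j"
  define e where "e k = of_nat A * (2::rat) powi k - of_nat B" for k
  define d' where "d' k = d k * e k" for k
  have AB: "of_nat A * (2::rat) powi j = of_nat B" unfolding A_def B_def by (rule two_powi_j)
  have e_alt: "e k = of_nat A * (2 powi k - 2 powi j)" for k
    unfolding e_def using AB by (simp add: algebra_simps)
  have A0: "A \<noteq> 0" unfolding A_def by simp
  have ej: "e j = 0" unfolding e_alt by simp
  have ene: "k \<noteq> j \<Longrightarrow> e k \<noteq> 0" for k unfolding e_alt using A0 two_powi_ne by simp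
  have mj: "m \<noteq> j" using insert.prems(1) by auto
  let ?h = "\<lambda>x. \<Sum>k\<in>insert m (insert j K). d k * x powi k"
  have e1: "expr f (A*N) (\<lambda>x. of_nat A * ?h (2 * x + 0))"
    by (rule expr_mult, rule expr_comp[OF insert.prems(4)], rule fin_affine) auto
  have e2: "expr f (B*N) (\<lambda>x. - (of_nat B * ?h x))"
    by (rule expr_neg[OF odd], rule expr_mult[OF insert.prems(4)])
  have e3: "expr f (A*N + B*N) (\<lambda>x. of_nat A * ?h (2 * x + 0) + - (of_nat B * ?h x))"
    by (rule expr_add[OF e1 e2])
  have fin: "finite (insert m K)" using insert.hyps(1) by simp
  have jn: "j \<notin> insert m K" using insert.hyps(2) mj by auto
  have eq: "of_nat A * ?h (2 * x + 0) + - (of_nat B * ?h x) = (\<Sum>k\<in>insert m K. d' k * x powi k)" for x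
  proof -
    let ?S = "insert m (insert j K)"
    have "of_nat A * ?h (2 * x + 0) + - (of_nat B * ?h x) =
       (\<Sum>k\<in>?S. of_nat A * (d k * (2 * x) powi k)) - (\<Sum>k\<in>?S. of_nat B * (d k * x powi k))"
      by (simp add: sum_distrib_left)
    also have "\<dots> = (\<Sum>k\<in>?S. of_nat A * (d k * (2 * x) powi k) - of_nat B * (d k * x powi k))"
      by (rule sum_subtractf[symmetric])
    also have "\<dots> = (\<Sum>k\<in>?S. d' k * x powi k)"
    proof (rule sum.cong)
      fix k
      have "of_nat A * (d k * (2 * x) powi k) - of_nat B * (d k * x powi k)
          = d k * (of_nat A * 2 powi k - of_nat B) * x powi k"
        by (simp add: power_int_mult_distrib algebra_simps)
      then show "of_nat A * (d k * (2 * x) powi k) - of_nat B * (d k * x powi k) = d' k * x powi k"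
        by (simp add: d'_def e_def)
    qed simp
    also have "\<dots> = (\<Sum>k\<in>insert j (insert m K). d' k * x powi k)" by (simp add: insert_commute)
    also have "\<dots> = (\<Sum>k\<in>insert m K. d' k * x powi k)"
      using fin jn by (simp add: d'_def ej)
    finally show ?thesis .
  qed
  have e4: "expr f (A*N + B*N) (\<lambda>x. \<Sum>k\<in>insert m K. d' k * x powi k)"
    by (rule expr_cong[OF e3 eq])
  show ?case
  proof (rule insert.IH[OF _ _ _ e4])
    show "m \<notin> K" using insert.prems(1) by auto
    show "d' m \<noteq> 0" using insert.prems(3) ene mj by (simp add: d'_def)
    show "\<forall>k. d' k \<noteq> 0 \<longrightarrow> k \<in> insert m K" using insert.prems(2) ej by (auto simp: d'_def)
  qed
qed

lemma leval_odd: assumes "laurent_odd c" shows "leval c (-a) = - leval c a"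
proof -
  have "c k * (-a) powi k = - (c k * a powi k)" for k
  proof -
    have "(-a) powi k = (-1) powi k * a powi k"
      using power_int_mult_distrib[of "-1" a k] by simp
    moreover have "(-1) powi k * c k = - c k" using assms unfolding laurent_odd_def by blast
    ultimately show ?thesis by (metis mult.assoc mult.commute mult_minus_left)
  qed
  then show ?thesis unfolding leval_def by (simp add: sum_negf)
qed

lemma exists_avoid: "finite (F::rat set) \<Longrightarrow> \<exists>x. x \<notin> F"
  using ex_new_if_finite[OF infinite_UNIV_char_0] by blast

lemma final_step:
  assumes "s \<noteq> 0" "expr f N (\<lambda>x. s * x)"
  shows "\<exists>N'::nat. N' \<ge> 1 \<and> (\<forall>q::rat. rep f N' q)"
proof -
  obtain F where F: "finite F" "\<forall>x. x \<notin> F \<longrightarrow> rep f N (s * x)" using assms(2) expr_def by auto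
  obtain x0 where x0: "x0 \<notin> insert 0 F" using exists_avoid F(1) by (meson finite_insert)
  have "N \<noteq> 0"
  proof
    assume "N = 0"
    then have "s * x0 = 0" using F(2) x0 unfolding rep_def by auto
    then show False using x0 assms(1) by auto
  qed
  moreover have "rep f (N+N) q" for q
  proof -
    let ?t = "q / s"
    obtain x where x: "x \<notin> F \<union> (\<lambda>z. ?t - z) ` F" using exists_avoid F(1) by (meson finite_UnI finite_imageI)
    have y: "?t - x \<notin> F"
    proof
      assume "?t - x \<in> F"
      then have "x \<in> (\<lambda>z. ?t - z) ` F" by (intro image_eqI[of _ _ "?t - x"]) auto
      then show False using x by auto
    qed
    have "rep f (N+N) (s * x + s * (?t - x))" using rep_add F(2) x y by blast
    moreover have "s * x + s * (?t - x) = q" using assms(1) by (simp add: algebra_simps)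
    ultimately show ?thesis by simp
  qed
  ultimately show ?thesis by (intro exI[of _ "N+N"]) auto
qed

theorem corollary3p5:
  fixes c :: "int \<Rightarrow> rat"
  assumes "laurent_poly c"
    and "c \<noteq> (\<lambda>_. 0)"
    and "laurent_odd c"
  shows "\<exists>N::nat. N \<ge> 1 \<and>
           (\<forall>q::rat. \<exists>a::nat \<Rightarrow> rat. (\<forall>i<N. a i \<noteq> 0) \<and> q = (\<Sum>i<N. leval c (a i)))"
proof -
  let ?f = "leval c"
  have odd: "\<forall>a. ?f (-a) = - ?f a" using leval_odd[OF assms(3)] by blast
  define S where "S = {k. c k \<noteq> 0}"
  have finS: "finite S" using assms(1) unfolding laurent_poly_def S_def .
  obtain m where mS: "m \<in> S" using assms(2) unfolding S_def by auto
  have c0: "c 0 = 0" using assms(3) unfolding laurent_odd_def by (metis power_int_0_right mult_1 neg_equal_zero)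
  have m0: "m \<noteq> 0" using mS c0 unfolding S_def by auto
  have base: "expr ?f 1 ?f" unfolding expr_def rep_def
    by (intro exI[of _ "{0}"]) (auto intro!: exI[of _ "\<lambda>_. x" for x])
  have ins: "insert m (S - {m}) = S" using mS by auto
  have base': "expr ?f 1 (\<lambda>x. \<Sum>k\<in>insert m (S - {m}). c k * x powi k)"
  proof -
    have "(\<lambda>x. \<Sum>k\<in>insert m (S - {m}). c k * x powi k) = ?f"
      unfolding ins by (rule ext) (simp add: leval_def S_def)
    then show ?thesis using base by simp
  qed
  have "\<exists>N r. r \<noteq> 0 \<and> expr ?f N (\<lambda>x. r * x powi m)"
  proof (rule kill[OF odd _ _ _ _ base'])
    show "finite (S - {m})" using finS by simp
    show "m \<notin> S - {m}" by simp
    show "\<forall>k. c k \<noteq> 0 \<longrightarrow> k \<in> insert m (S - {m})" using ins S_def by auto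
    show "c m \<noteq> 0" using mS S_def by simp
  qed
  then obtain N1 r where r: "r \<noteq> 0" "expr ?f N1 (\<lambda>x. r * x powi m)" by blast
  obtain p where p: "p \<ge> 1" "expr ?f N1 (\<lambda>x. r * x ^ p)"
  proof (cases "m > 0")
    case True
    have "x powi m = x ^ nat m" for x :: rat using True by (metis power_int_of_nat int_nat_eq less_le_not_le)
    then have ee: "expr ?f N1 (\<lambda>x. r * x ^ nat m)" using r(2) by simp
    have "nat m \<ge> 1" using True by simp
    then show ?thesis using that ee by blast
  next
    case False
    have e: "expr ?f N1 (\<lambda>x. r * (inverse x) powi m)"
      by (rule expr_comp[OF r(2)], rule fin_inverse)
    have "r * (inverse x) powi m = r * x ^ nat (-m)" for x :: rat
    proof -
      have "(inverse x) powi m = x powi (-m)" by (simp add: power_int_inverse power_int_minus)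
      also have "\<dots> = x ^ nat (-m)" using False by (metis power_int_of_nat int_nat_eq neg_0_le_iff_le linorder_not_less)
      finally show ?thesis by simp
    qed
    then have ee: "expr ?f N1 (\<lambda>x. r * x ^ nat (-m))" by (rule expr_cong[OF e])
    have "nat (-m) \<ge> 1" using False m0 by simp
    then show ?thesis using that ee by blast
  qed
  have e1: "expr ?f N1 (\<lambda>x. r * (1 * x + 1) ^ p)"
    by (rule expr_comp[OF p(2)], rule fin_affine) auto
  define T where "T = int ` {..p}"
  define d where "d k = (if k \<in> T then r * of_nat (p choose nat k) else 0)" for k
  have T1: "insert 1 (T - {1}) = T" using p(1) unfolding T_def by force
  have eq: "r * (1 * x + 1) ^ p = (\<Sum>k\<in>insert 1 (T - {1}). d k * x powi k)" for x :: rat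
  proof -
    have "r * (1 * x + 1) ^ p = (\<Sum>k\<le>p. r * of_nat (p choose k) * x ^ k)"
      by (simp add: binomial_ring sum_distrib_left mult.assoc)
    also have "\<dots> = (\<Sum>k\<le>p. d (int k) * x powi (int k))"
      by (rule sum.cong) (auto simp: d_def T_def)
    also have "\<dots> = (\<Sum>k\<in>T. d k * x powi k)"
      unfolding T_def by (subst sum.reindex) (auto simp: inj_on_def)
    finally show ?thesis using T1 by simp
  qed
  have e2: "expr ?f N1 (\<lambda>x. \<Sum>k\<in>insert 1 (T - {1}). d k * x powi k)"
    by (rule expr_cong[OF e1 eq])
  have d1: "d 1 \<noteq> 0" using r(1) p(1) T1 unfolding d_def by auto
  have finT: "finite (T - {1})" unfolding T_def by simp
  obtain N2 s where s: "s \<noteq> 0" "expr ?f N2 (\<lambda>x. s * x powi 1)"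
    using kill[OF odd finT _ _ d1 e2] T1 d_def by fastforce
  have "expr ?f N2 (\<lambda>x. s * x)" using s(2) by simp
  from final_step[OF s(1) this] show ?thesis unfolding rep_def by blast
qed

end
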